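(* Let $\eta>0$, $n\geq 2$, $G=(-\eta,1+\eta)\times\mathbb{R}^{n-1}$, $\pi:G\to(-\eta,1+\eta)$ the projection to the first coordinate, and $v_0:[0,1]\to G$, $v_0(t)=(t,0)$. For $v\in\Omega([0,1],G)$ write $a_v=\pi(v(0))$, $b_v=\pi(v(1))$. Then for every neighborhood $W_2$ of $v_0$ in $\Omega([0,1],G)$ there exists an open neighborhood $W_3\subseteq W_2$ of $v_0$ with the following property: for every $v\in W_3$ we have $a_v<b_v$ and there exists a section $\tilde v$ of $G|_{[a_v,b_v]}$, i.e. a map $\tilde v:[a_v,b_v]\to G$ of the form $\tilde v(s)=(s,\tilde u(s))$, which is a reparametrization of $v$, i.e. $v=\tilde v\circ\sigma$ for some $C^2$ diffeomorphism $\sigma:[0,1]\to[a_v,b_v]$ with $\sigma(0)=a_v$, $\sigma(1)=b_v$.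
   Context: $\Omega([0,1],G)$ denotes the space of $C^2$ immersions $[0,1]\to G$ with the $C^2$ topology. *)

theory Defs
  imports "HOL-Analysis.Analysis"
begin

definition C2_on :: "real set \<Rightarrow> (real \<Rightarrow> 'a::real_normed_vector) \<Rightarrow> bool" where
  "C2_on S f \<longleftrightarrow> (\<exists>f' f''. (\<forall>t\<in>S. (f has_vector_derivative f' t) (at t within S)
       \<and> (f' has_vector_derivative f'' t) (at t within S)) \<and> continuous_on S f'')"

definition C2_diffeo :: "real set \<Rightarrow> real set \<Rightarrow> (real \<Rightarrow> real) \<Rightarrow> bool" where
  "C2_diffeo S T \<sigma> \<longleftrightarrow> bij_betw \<sigma> S T \<and> C2_on S \<sigma> \<and> C2_on T (the_inv_into S \<sigma>)"

definition Omega :: "('a::real_normed_vector) set \<Rightarrow> (real \<Rightarrow> 'a) set" where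
  "Omega G = {v. C2_on {0..1} v \<and> (\<forall>t\<in>{0..1}. vector_derivative v (at t within {0..1}) \<noteq> 0)
                 \<and> v ` {0..1} \<subseteq> G}"

definition D1 :: "(real \<Rightarrow> 'a::real_normed_vector) \<Rightarrow> real \<Rightarrow> 'a" where
  "D1 v t = vector_derivative v (at t within {0..1})"

definition D2 :: "(real \<Rightarrow> 'a::real_normed_vector) \<Rightarrow> real \<Rightarrow> 'a" where
  "D2 v t = vector_derivative (D1 v) (at t within {0..1})"

definition C2_dist :: "(real \<Rightarrow> 'a::real_normed_vector) \<Rightarrow> (real \<Rightarrow> 'a) \<Rightarrow> real" where
  "C2_dist v w = (SUP t\<in>{0..1}. norm (v t - w t)) + (SUP t\<in>{0..1}. norm (D1 v t - D1 w t))
                 + (SUP t\<in>{0..1}. norm (D2 v t - D2 w t))"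

definition C2_nhd :: "(real \<Rightarrow> 'a::real_normed_vector) set \<Rightarrow> (real \<Rightarrow> 'a) set \<Rightarrow> (real \<Rightarrow> 'a) \<Rightarrow> bool" where
  "C2_nhd X W v0 \<longleftrightarrow> W \<subseteq> X \<and> v0 \<in> W \<and> (\<exists>e>0. \<forall>v\<in>X. C2_dist v v0 < e \<longrightarrow> v \<in> W)"

definition C2_open :: "(real \<Rightarrow> 'a::real_normed_vector) set \<Rightarrow> (real \<Rightarrow> 'a) set \<Rightarrow> bool" where
  "C2_open X W \<longleftrightarrow> W \<subseteq> X \<and> (\<forall>w\<in>W. \<exists>e>0. \<forall>v\<in>X. C2_dist v w < e \<longrightarrow> v \<in> W)"

end

theory Submission
  imports Defs
begin

lemma hvd_fst:
  assumes "(f has_vector_derivative V) F"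
  shows "((\<lambda>x. fst (f x)) has_vector_derivative fst V) F"
  using has_derivative_fst[OF assms[unfolded has_vector_derivative_def]]
  by (simp add: has_vector_derivative_def)

lemma C2_D:
  fixes v :: "real \<Rightarrow> 'a::euclidean_space"
  assumes "C2_on {0..1} v"
  shows "\<forall>t\<in>{0..1}. (v has_vector_derivative D1 v t) (at t within {0..1}) \<and>
           (D1 v has_vector_derivative D2 v t) (at t within {0..1})"
    and "continuous_on {0..1} (D2 v)"
proof -
  obtain f' f'' where d: "\<forall>t\<in>{0..1}. (v has_vector_derivative f' t) (at t within {0..1})
       \<and> (f' has_vector_derivative f'' t) (at t within {0..1})" and c: "continuous_on {0..1} f''"
    using assms unfolding C2_on_def by blast
  have e1: "D1 v t = f' t" if "t \<in> {0..1}" for t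
  proof -
    have "(v has_vector_derivative f' t) (at t within {0..1})" using d that by blast
    then show ?thesis unfolding D1_def
      by (rule vector_derivative_within_closed_interval[OF _ that, rotated]) simp
  qed
  have h2: "(D1 v has_vector_derivative f'' t) (at t within {0..1})" if "t \<in> {0..1}" for t
  proof -
    have ff: "(f' has_vector_derivative f'' t) (at t within {0..1})" using d that by blast
    show ?thesis by (rule has_vector_derivative_transform[OF that _ ff]) (simp add: e1)
  qed
  have e2: "D2 v t = f'' t" if "t \<in> {0..1}" for t
    unfolding D2_def by (rule vector_derivative_within_closed_interval[OF _ that h2[OF that]]) simp
  show "\<forall>t\<in>{0..1}. (v has_vector_derivative D1 v t) (at t within {0..1}) \<and>
           (D1 v has_vector_derivative D2 v t) (at t within {0..1})"
    using d e1 e2 h2 by auto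
  show "continuous_on {0..1} (D2 v)"
    using c e2 continuous_on_cong by (metis (no_types, lifting))
qed

lemma C2_cont:
  fixes v :: "real \<Rightarrow> 'a::euclidean_space"
  assumes "C2_on {0..1} v"
  shows "continuous_on {0..1} v" "continuous_on {0..1} (D1 v)" "continuous_on {0..1} (D2 v)"
  using C2_D[OF assms] by (auto intro: continuous_on_vector_derivative)

lemma bdd_diff:
  fixes f g :: "real \<Rightarrow> 'a::real_normed_vector"
  assumes "continuous_on {0..1} f" "continuous_on {0..1} g"
  shows "bdd_above ((\<lambda>t. norm (f t - g t)) ` {0..1})"
proof -
  have "continuous_on {0..1} (\<lambda>t. norm (f t - g t))"
    using assms by (intro continuous_intros)
  then have "compact ((\<lambda>t. norm (f t - g t)) ` {0..1})"
    by (intro compact_continuous_image) auto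
  then show ?thesis by (intro bounded_imp_bdd_above compact_imp_bounded)
qed

lemma sup_tri:
  fixes f g h :: "real \<Rightarrow> 'a::real_normed_vector"
  assumes "continuous_on {0..1} f" "continuous_on {0..1} g" "continuous_on {0..1} h"
  shows "(SUP t\<in>{0..1}. norm (f t - h t)) \<le> (SUP t\<in>{0..1}. norm (f t - g t)) + (SUP t\<in>{0..1}. norm (g t - h t))"
proof (rule cSUP_least)
  show "{0..1::real} \<noteq> {}" by simp
  fix t :: real assume t: "t \<in> {0..1}"
  have "norm (f t - h t) \<le> norm (f t - g t) + norm (g t - h t)"
    using norm_triangle_ineq[of "f t - g t" "g t - h t"] by simp
  also have "\<dots> \<le> (SUP t\<in>{0..1}. norm (f t - g t)) + (SUP t\<in>{0..1}. norm (g t - h t))"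
    by (intro add_mono cSUP_upper t bdd_diff assms)
  finally show "norm (f t - h t) \<le> \<dots>" .
qed

lemma sup_nonneg:
  fixes f g :: "real \<Rightarrow> 'a::real_normed_vector"
  assumes "continuous_on {0..1} f" "continuous_on {0..1} g"
  shows "\<forall>t\<in>{0..1}. norm (f t - g t) \<le> (SUP t\<in>{0..1}. norm (f t - g t))"
    and "0 \<le> (SUP t\<in>{0..1}. norm (f t - g t))"
proof -
  show "\<forall>t\<in>{0..1}. norm (f t - g t) \<le> (SUP t\<in>{0..1}. norm (f t - g t))"
    by (intro ballI cSUP_upper bdd_diff assms)
  have "norm (f 0 - g 0) \<le> (SUP t\<in>{0..1}. norm (f t - g t))"
    by (intro cSUP_upper bdd_diff assms) auto
  then show "0 \<le> (SUP t\<in>{0..1}. norm (f t - g t))" using norm_ge_zero order_trans by blast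
qed

lemma dist_tri:
  fixes u v w :: "real \<Rightarrow> 'a::euclidean_space"
  assumes "C2_on {0..1} u" "C2_on {0..1} v" "C2_on {0..1} w"
  shows "C2_dist u w \<le> C2_dist u v + C2_dist v w"
proof -
  note c = C2_cont[OF assms(1)] C2_cont[OF assms(2)] C2_cont[OF assms(3)]
  have 1: "(SUP t\<in>{0..1}. norm (u t - w t)) \<le> (SUP t\<in>{0..1}. norm (u t - v t)) + (SUP t\<in>{0..1}. norm (v t - w t))"
    by (rule sup_tri) (use c in auto)
  have 2: "(SUP t\<in>{0..1}. norm (D1 u t - D1 w t)) \<le> (SUP t\<in>{0..1}. norm (D1 u t - D1 v t)) + (SUP t\<in>{0..1}. norm (D1 v t - D1 w t))"
    by (rule sup_tri) (use c in auto)
  have 3: "(SUP t\<in>{0..1}. norm (D2 u t - D2 w t)) \<le> (SUP t\<in>{0..1}. norm (D2 u t - D2 v t)) + (SUP t\<in>{0..1}. norm (D2 v t - D2 w t))"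
    by (rule sup_tri) (use c in auto)
  show ?thesis unfolding C2_dist_def using add_mono[OF add_mono[OF 1 2] 3] by (simp add: algebra_simps)
qed

lemma dist_D1:
  fixes u v :: "real \<Rightarrow> 'a::euclidean_space"
  assumes "C2_on {0..1} u" "C2_on {0..1} v" "t \<in> {0..1}"
  shows "norm (D1 u t - D1 v t) \<le> C2_dist u v"
proof -
  note c = C2_cont[OF assms(1)] C2_cont[OF assms(2)]
  have 1: "0 \<le> (SUP t\<in>{0..1}. norm (u t - v t))" by (rule sup_nonneg(2)) (use c in auto)
  have 2: "norm (D1 u t - D1 v t) \<le> (SUP t\<in>{0..1}. norm (D1 u t - D1 v t))"
    using sup_nonneg(1)[of "D1 u" "D1 v"] c assms(3) by blast
  have 3: "0 \<le> (SUP t\<in>{0..1}. norm (D2 u t - D2 v t))" by (rule sup_nonneg(2)) (use c in auto)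
  show ?thesis unfolding C2_dist_def using 1 2 3 by linarith
qed

lemma dist_self: "C2_dist v v = 0"
  unfolding C2_dist_def by (simp del: atLeastAtMost_iff)


lemma reparam:
  fixes v :: "real \<Rightarrow> real \<times> (real ^ 'm)"
  assumes C2: "C2_on {0..1} v" and pos: "\<forall>t\<in>{0..1}. fst (D1 v t) > 0" and G: "v ` {0..1} \<subseteq> G"
  shows "fst (v 0) < fst (v 1) \<and>
              (\<exists>vt \<sigma>. (\<forall>s\<in>{fst (v 0)..fst (v 1)}. vt s \<in> G \<and> fst (vt s) = s)
                  \<and> C2_diffeo {0..1} {fst (v 0)..fst (v 1)} \<sigma>
                  \<and> \<sigma> 0 = fst (v 0) \<and> \<sigma> 1 = fst (v 1)
                  \<and> (\<forall>t\<in>{0..1}. v t = vt (\<sigma> t)))"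
proof -
  define \<sigma> where "\<sigma> = (\<lambda>t. fst (v t))"
  define s1 where "s1 = (\<lambda>t. fst (D1 v t))"
  define s2 where "s2 = (\<lambda>t. fst (D2 v t))"
  define a where "a = \<sigma> 0"
  define b where "b = \<sigma> 1"
  have dv: "\<forall>t\<in>{0..1}. (v has_vector_derivative D1 v t) (at t within {0..1}) \<and>
           (D1 v has_vector_derivative D2 v t) (at t within {0..1})"
    and cD2: "continuous_on {0..1} (D2 v)" using C2_D[OF C2] by auto
  have ds: "(\<sigma> has_real_derivative s1 t) (at t within {0..1})" if "t \<in> {0..1}" for t
    using hvd_fst[of v "D1 v t"] dv that unfolding \<sigma>_def s1_def
    by (simp add: has_real_derivative_iff_has_vector_derivative)
  have ds1: "(s1 has_real_derivative s2 t) (at t within {0..1})" if "t \<in> {0..1}" for t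
    using hvd_fst[of "D1 v" "D2 v t"] dv that unfolding s2_def s1_def
    by (simp add: has_real_derivative_iff_has_vector_derivative)
  have cs: "continuous_on {0..1} \<sigma>"
    using ds by (intro continuous_on_vector_derivative)
      (auto simp: has_real_derivative_iff_has_vector_derivative)
  have cs1: "continuous_on {0..1} s1"
    using ds1 by (intro continuous_on_vector_derivative)
      (auto simp: has_real_derivative_iff_has_vector_derivative)
  have cs2: "continuous_on {0..1} s2"
    unfolding s2_def using cD2 by (intro continuous_intros)
  have s1pos: "s1 t > 0" if "t \<in> {0..1}" for t using pos that s1_def by auto
  have mono: "\<sigma> x < \<sigma> y" if "0 \<le> x" "x < y" "y \<le> 1" for x y
  proof (rule DERIV_pos_imp_increasing_open[OF \<open>x < y\<close>])
    fix z assume z: "x < z" "z < y"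
    have "at z within {0..1} = at z" using z that by (intro at_within_Icc_at) auto
    then have "DERIV \<sigma> z :> s1 z" using ds[of z] z that by auto
    then show "\<exists>d. DERIV \<sigma> z :> d \<and> d > 0" using s1pos[of z] z that by auto
  next
    show "continuous_on {x..y} \<sigma>" using that by (intro continuous_on_subset[OF cs]) auto
  qed
  have inj: "inj_on \<sigma> {0..1}"
  proof (rule inj_onI)
    fix x y assume "x \<in> {0..1::real}" "y \<in> {0..1::real}" "\<sigma> x = \<sigma> y"
    then show "x = y" using mono[of x y] mono[of y x] by (cases x y rule: linorder_cases) auto
  qed
  have ab: "a < b" unfolding a_def b_def using mono[of 0 1] by simp
  have img: "\<sigma> ` {0..1} = {a..b}"
  proof
    show "\<sigma> ` {0..1} \<subseteq> {a..b}"
    proof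
      fix y assume "y \<in> \<sigma> ` {0..1}"
      then obtain x where x: "x \<in> {0..1}" "y = \<sigma> x" by auto
      then show "y \<in> {a..b}" unfolding a_def b_def
        using mono[of 0 x] mono[of x 1] by (cases "x = 0"; cases "x = 1") auto
    qed
    show "{a..b} \<subseteq> \<sigma> ` {0..1}"
    proof
      fix y assume "y \<in> {a..b}"
      then obtain x where "0 \<le> x" "x \<le> 1" "\<sigma> x = y"
        using IVT'[of \<sigma> 0 y 1] cs unfolding a_def b_def by auto
      then show "y \<in> \<sigma> ` {0..1}" by auto
    qed
  qed
  define g where "g = the_inv_into {0..1} \<sigma>"
  have gs: "g (\<sigma> t) = t" if "t \<in> {0..1}" for t
    unfolding g_def using the_inv_into_f_f[OF inj that] .
  have sg: "\<sigma> (g s) = s" and gin: "g s \<in> {0..1}" if "s \<in> {a..b}" for s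
  proof -
    show "\<sigma> (g s) = s" unfolding g_def using f_the_inv_into_f[OF inj] that img by auto
    show "g s \<in> {0..1}" unfolding g_def using the_inv_into_into[OF inj, of s "{0..1}"] that img by auto
  qed
  have gimg: "g ` {a..b} = {0..1}"
  proof
    show "g ` {a..b} \<subseteq> {0..1}" using gin by auto
    show "{0..1} \<subseteq> g ` {a..b}"
    proof
      fix t :: real assume t: "t \<in> {0..1}"
      then have "\<sigma> t \<in> {a..b}" using img by auto
      moreover have "g (\<sigma> t) = t" using gs t by auto
      ultimately show "t \<in> g ` {a..b}" by (metis image_eqI)
    qed
  qed
  have cg: "continuous_on {a..b} g"
    using continuous_on_inv[OF cs _ ] gs img by auto
  have dg: "(g has_real_derivative inverse (s1 (g s))) (at s within {a..b})" if s: "s \<in> {a..b}" for s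
  proof -
    have "(g has_derivative (*) (inverse (s1 (g s)))) (at (\<sigma> (g s)) within \<sigma> ` {0..1})"
    proof (rule has_derivative_inverse_within)
      show "(\<sigma> has_derivative (*) (s1 (g s))) (at (g s) within {0..1})"
        using ds[OF gin[OF s]] by (simp add: has_field_derivative_def)
      show "continuous (at (\<sigma> (g s)) within \<sigma> ` {0..1}) g"
        using cg s sg img by (simp add: continuous_on_eq_continuous_within)
      show "g s \<in> {0..1}" using gin[OF s] .
      show "linear ((*) (inverse (s1 (g s))))" by (simp add: linear_cmul)
      show "(*) (inverse (s1 (g s))) \<circ> (*) (s1 (g s)) = id"
        using s1pos[OF gin[OF s]] by (auto simp: fun_eq_iff)
      show "\<And>x. x \<in> {0..1} \<Longrightarrow> g (\<sigma> x) = x" using gs by auto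
    qed
    then show ?thesis using sg[OF s] img by (simp add: has_field_derivative_def)
  qed
  define g1 where "g1 = (\<lambda>s. inverse (s1 (g s)))"
  define g2 where "g2 = (\<lambda>s. - ((inverse (s1 (g s)) * s2 (g s)) * inverse (s1 (g s) ^ Suc (Suc 0))))"
  have dg1: "(g1 has_real_derivative g2 s) (at s within {a..b})" if s: "s \<in> {a..b}" for s
  proof -
    have "((s1 \<circ> g) has_vector_derivative (inverse (s1 (g s)) *\<^sub>R s2 (g s))) (at s within {a..b})"
      apply (rule vector_diff_chain_within)
      using dg[OF s] ds1[OF gin[OF s]] gimg
      by (auto simp: has_real_derivative_iff_has_vector_derivative)
    then have "((\<lambda>s. s1 (g s)) has_real_derivative (inverse (s1 (g s)) * s2 (g s))) (at s within {a..b})"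
      by (simp add: has_real_derivative_iff_has_vector_derivative o_def)
    from DERIV_inverse_fun[OF this] s1pos[OF gin[OF s]]
    show ?thesis unfolding g1_def g2_def by auto
  qed
  have cs1g: "continuous_on {a..b} (\<lambda>s. s1 (g s))"
    using continuous_on_compose2[OF cs1 cg] gimg by auto
  have cs2g: "continuous_on {a..b} (\<lambda>s. s2 (g s))"
    using continuous_on_compose2[OF cs2 cg] gimg by auto
  have cg2: "continuous_on {a..b} g2"
    unfolding g2_def using cs1g cs2g s1pos gin
    by (intro continuous_intros) (auto simp: less_imp_neq[symmetric])
  have C2s: "C2_on {0..1} \<sigma>"
    unfolding C2_on_def using ds ds1 cs2
    by (intro exI[of _ s1] exI[of _ s2]) (auto simp: has_real_derivative_iff_has_vector_derivative)
  have C2g: "C2_on {a..b} g"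
    unfolding C2_on_def using dg dg1 cg2 unfolding g1_def
    by (intro exI[of _ g1] exI[of _ g2]) (auto simp: g1_def has_real_derivative_iff_has_vector_derivative)
  have diffeo: "C2_diffeo {0..1} {a..b} \<sigma>"
    unfolding C2_diffeo_def bij_betw_def using inj img C2s C2g g_def by auto
  show ?thesis
  proof (intro conjI exI)
    show "fst (v 0) < fst (v 1)" using ab unfolding a_def b_def \<sigma>_def .
    show "\<forall>s\<in>{fst (v 0)..fst (v 1)}. (\<lambda>s. v (g s)) s \<in> G \<and> fst ((\<lambda>s. v (g s)) s) = s"
      using G gin sg unfolding a_def b_def \<sigma>_def by auto
    show "C2_diffeo {0..1} {fst (v 0)..fst (v 1)} \<sigma>" using diffeo unfolding a_def b_def \<sigma>_def .
    show "\<sigma> 0 = fst (v 0)" "\<sigma> 1 = fst (v 1)" unfolding \<sigma>_def by auto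
    show "\<forall>t\<in>{0..1}. v t = (\<lambda>s. v (g s)) (\<sigma> t)" using gs by auto
  qed
qed


theorem proposition2p4:
  fixes \<eta> :: real and G :: "(real \<times> (real ^ 'm)) set" and v0 :: "real \<Rightarrow> real \<times> (real ^ 'm)"
    and W2 :: "(real \<Rightarrow> real \<times> (real ^ 'm)) set"
  assumes "\<eta> > 0"
    and "G = {p. - \<eta> < fst p \<and> fst p < 1 + \<eta>}"
    and "v0 = (\<lambda>t. (t, 0))"
    and "C2_nhd (Omega G) W2 v0"
  shows "\<exists>W3. C2_open (Omega G) W3 \<and> v0 \<in> W3 \<and> W3 \<subseteq> W2 \<and>
           (\<forall>v\<in>W3. fst (v 0) < fst (v 1) \<and>
              (\<exists>vt \<sigma>. (\<forall>s\<in>{fst (v 0)..fst (v 1)}. vt s \<in> G \<and> fst (vt s) = s)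
                  \<and> C2_diffeo {0..1} {fst (v 0)..fst (v 1)} \<sigma>
                  \<and> \<sigma> 0 = fst (v 0) \<and> \<sigma> 1 = fst (v 1)
                  \<and> (\<forall>t\<in>{0..1}. v t = vt (\<sigma> t))))"
proof -
  obtain e2 where W2O: "W2 \<subseteq> Omega G" and v0W2: "v0 \<in> W2" and e2: "e2 > 0"
    and e2W: "\<forall>v\<in>Omega G. C2_dist v v0 < e2 \<longrightarrow> v \<in> W2"
    using assms(4) unfolding C2_nhd_def by blast
  define e where "e = min e2 (1/2)"
  have e: "e > 0" using e2 e_def by auto
  define W3 where "W3 = {v \<in> Omega G. C2_dist v v0 < e}"
  have v0O: "v0 \<in> Omega G" using W2O v0W2 by auto
  have C2v0: "C2_on {0..1} v0" using v0O unfolding Omega_def by auto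
  have D1v0: "D1 v0 t = (1, 0)" if "t \<in> {0..1}" for t
  proof -
    have "((\<lambda>t. (t, 0::real^'m)) has_vector_derivative (1, 0)) (at t within {0..1})"
      by (intro has_vector_derivative_Pair has_vector_derivative_id has_vector_derivative_const)
    then show ?thesis unfolding D1_def assms(3)
      using that by (intro vector_derivative_within_closed_interval) auto
  qed
  show ?thesis
  proof (intro exI[of _ W3] conjI)
    show "C2_open (Omega G) W3"
      unfolding C2_open_def
    proof (intro conjI ballI)
      show "W3 \<subseteq> Omega G" unfolding W3_def by auto
      fix w assume w: "w \<in> W3"
      then have wO: "w \<in> Omega G" and wd: "C2_dist w v0 < e" unfolding W3_def by auto
      show "\<exists>e'>0. \<forall>v\<in>Omega G. C2_dist v w < e' \<longrightarrow> v \<in> W3"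
      proof (intro exI[of _ "e - C2_dist w v0"] conjI ballI impI)
        show "0 < e - C2_dist w v0" using wd by simp
        fix v assume vO: "v \<in> Omega G" and vd: "C2_dist v w < e - C2_dist w v0"
        have "C2_dist v v0 \<le> C2_dist v w + C2_dist w v0"
          using vO wO C2v0 by (intro dist_tri) (auto simp: Omega_def)
        then show "v \<in> W3" using vd vO unfolding W3_def by auto
      qed
    qed
    show "v0 \<in> W3" unfolding W3_def using v0O e dist_self[of v0] by auto
    show "W3 \<subseteq> W2" unfolding W3_def using e2W e_def by auto
    show "\<forall>v\<in>W3. fst (v 0) < fst (v 1) \<and>
              (\<exists>vt \<sigma>. (\<forall>s\<in>{fst (v 0)..fst (v 1)}. vt s \<in> G \<and> fst (vt s) = s)
                  \<and> C2_diffeo {0..1} {fst (v 0)..fst (v 1)} \<sigma>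
                  \<and> \<sigma> 0 = fst (v 0) \<and> \<sigma> 1 = fst (v 1)
                  \<and> (\<forall>t\<in>{0..1}. v t = vt (\<sigma> t)))"
    proof
      fix v assume v: "v \<in> W3"
      then have vO: "v \<in> Omega G" and vd: "C2_dist v v0 < e" unfolding W3_def by auto
      have C2v: "C2_on {0..1} v" and vG: "v ` {0..1} \<subseteq> G" using vO unfolding Omega_def by auto
      have pos: "\<forall>t\<in>{0..1}. fst (D1 v t) > 0"
      proof
        fix t :: real assume t: "t \<in> {0..1}"
        have "norm (D1 v t - D1 v0 t) \<le> C2_dist v v0" using dist_D1[OF C2v C2v0 t] .
        then have n: "norm (D1 v t - (1, 0)) < 1/2" using vd e_def D1v0[OF t] by auto
        define z where "z = D1 v t - (1, 0)"
        have "norm (fst z) \<le> norm z"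
          using norm_fst_le[of "fst z" "snd z"] by simp
        moreover have "fst z = fst (D1 v t) - 1" by (simp add: z_def)
        ultimately have "\<bar>fst (D1 v t) - 1\<bar> < 1/2" using n z_def by simp
        then show "fst (D1 v t) > 0" by linarith
      qed
      show "fst (v 0) < fst (v 1) \<and>
              (\<exists>vt \<sigma>. (\<forall>s\<in>{fst (v 0)..fst (v 1)}. vt s \<in> G \<and> fst (vt s) = s)
                  \<and> C2_diffeo {0..1} {fst (v 0)..fst (v 1)} \<sigma>
                  \<and> \<sigma> 0 = fst (v 0) \<and> \<sigma> 1 = fst (v 1)
                  \<and> (\<forall>t\<in>{0..1}. v t = vt (\<sigma> t)))"
        by (rule reparam[OF C2v pos vG])
    qed
  qed
qed

end
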